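(* Let $\alpha,\beta,p\in\mathbb{C}$, $s^2=\alpha^2-p^2$, $t^2=\beta^2-p^2$, and let $\rho\neq 0$ be a constant. Suppose $\varphi_1,\varphi_2:\mathbb{Z}^2\to\mathbb{C}\setminus\{0\}$ satisfy, for all $n,m\in\mathbb{Z}$, the discrete Abel relations $$\varphi_1\widetilde{\varphi}_2-\varphi_2\widetilde{\varphi}_1=\varphi_1\widehat{\varphi}_2-\varphi_2\widehat{\varphi}_1=\rho\,s^{2n}t^{2m}.$$ Then each of $\varphi=\varphi_1$ and $\varphi=\varphi_2$ satisfies the lattice eigenfunction KdV (leKdV) equation $$(\alpha^2-p^2)\,\varphi\widehat{\varphi}-(\beta^2-p^2)\,\varphi\widetilde{\varphi}-\widetilde{\varphi}\,\widehat{\widetilde{\varphi}}+\widehat{\varphi}\,\widehat{\widetilde{\varphi}}=0 .$$ In other words, these relations define an auto-Bäcklund transformation between $\varphi_1$ and $\varphi_2$ as solutions of the leKdV equation. (In particular this applies to two linearly independent solutions of the Lax pair $\widetilde{\widetilde{\varphi}}+h\widetilde{\varphi}+\alpha^2\varphi=p^2\varphi$, $\widehat{\varphi}=\widetilde{\varphi}-g\varphi$ with $\widehat h-\widetilde h=\widetilde{\widetilde g}-g$, $(h+\widetilde g)g=\beta^2-\alpha^2$, which satisfy these relations.)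
   Context: Shift notation: for a function $f$ on $\mathbb{Z}^2$ (variables $n,m$), $\widetilde f(n,m)=f(n+1,m)$, $\widehat f(n,m)=f(n,m+1)$, and $\widehat{\widetilde f}(n,m)=f(n+1,m+1)$. *)

theory Defs
  imports Complex_Main
begin

end

theory Submission
  imports Defs
begin

lemma core:
  fixes a b A B P Q c d W S T :: complex
  assumes R1: "a*B - b*A = W" and R2: "a*Q - b*P = W"
    and R3: "P*d - Q*c = T*W" and R4: "A*d - B*c = S*W" and W0: "W \<noteq> 0"
  shows "S*a*P - T*a*A - A*c + P*c = 0"
proof -
  have I1: "W*c = -S*W*a + (a*d-b*c)*A"
  proof -
    have "W*c + S*W*a - (a*d-b*c)*A = c*(a*B-b*A) + (A*d-B*c)*a - (a*d-b*c)*A"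
      using R1 R4 by simp
    also have "\<dots> = 0" by (simp add: algebra_simps)
    finally show ?thesis by (simp add: algebra_simps)
  qed
  have I2: "(A-P)*(a*d-b*c) = (S-T)*W*a"
  proof -
    have Q: "a*Q = a*B - b*A + b*P" using R1 R2 by (simp add: algebra_simps)
    have "(A-P)*(a*d-b*c) - (S-T)*W*a = (A-P)*(a*d-b*c) - a*(A*d - B*c) + a*(P*d - Q*c)"
      using R3 R4 by (simp add: algebra_simps)
    also have "\<dots> = (A-P)*(a*d-b*c) - a*(A*d - B*c) + a*P*d - (a*Q)*c"
      by (simp add: algebra_simps)
    also have "\<dots> = 0" unfolding Q by (simp add: algebra_simps)
    finally show ?thesis by simp
  qed
  have "W*(S*a*P - T*a*A - A*c + P*c) = S*W*a*P - T*W*a*A + (P-A)*(W*c)"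
    by (simp add: algebra_simps)
  also have "\<dots> = S*W*a*P - T*W*a*A + (P-A)*(-S*W*a + (a*d-b*c)*A)"
    by (simp add: I1)
  also have "\<dots> = A*((S-T)*W*a - (A-P)*(a*d-b*c))"
    by (simp add: algebra_simps)
  also have "\<dots> = 0" by (simp add: I2)
  finally show ?thesis using W0 by simp
qed

theorem proposition3p1:
  fixes \<alpha> \<beta> p s t \<rho> :: complex
    and \<phi>1 \<phi>2 :: "int \<Rightarrow> int \<Rightarrow> complex"
  assumes hs: "s^2 = \<alpha>^2 - p^2" and ht: "t^2 = \<beta>^2 - p^2"
    and s0: "s \<noteq> 0" and t0: "t \<noteq> 0"
    and rho: "\<rho> \<noteq> 0"
    and nz1: "\<And>n m. \<phi>1 n m \<noteq> 0" and nz2: "\<And>n m. \<phi>2 n m \<noteq> 0"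
    and tilde: "\<And>n m. \<phi>1 n m * \<phi>2 (n+1) m - \<phi>2 n m * \<phi>1 (n+1) m
                   = \<rho> * s powi (2*n) * t powi (2*m)"
    and hat: "\<And>n m. \<phi>1 n m * \<phi>2 n (m+1) - \<phi>2 n m * \<phi>1 n (m+1)
                   = \<rho> * s powi (2*n) * t powi (2*m)"
  shows "\<forall>\<phi> \<in> {\<phi>1, \<phi>2}. \<forall>n m.
           (\<alpha>^2 - p^2) * \<phi> n m * \<phi> n (m+1) - (\<beta>^2 - p^2) * \<phi> n m * \<phi> (n+1) m
           - \<phi> (n+1) m * \<phi> (n+1) (m+1) + \<phi> n (m+1) * \<phi> (n+1) (m+1) = 0"
proof (intro ballI allI)
  fix \<phi> n m
  assume ph: "\<phi> \<in> {\<phi>1, \<phi>2}"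
  define W where "W = \<rho> * s powi (2*n) * t powi (2*m)"
  have W0: "W \<noteq> 0" using s0 t0 rho by (simp add: W_def)
  have sp: "s powi (2*(n+1)) = s powi (2*n) * s^2"
    using s0 by (simp add: distrib_left power_int_add)
  have tp: "t powi (2*(m+1)) = t powi (2*m) * t^2"
    using t0 by (simp add: distrib_left power_int_add)
  have W1: "\<rho> * s powi (2*(n+1)) * t powi (2*m) = s^2 * W"
    unfolding W_def sp by (simp add: algebra_simps)
  have W2: "\<rho> * s powi (2*n) * t powi (2*(m+1)) = t^2 * W"
    unfolding W_def tp by (simp add: algebra_simps)
  have R1: "\<phi>1 n m * \<phi>2 (n+1) m - \<phi>2 n m * \<phi>1 (n+1) m = W"
    using tilde W_def by simp
  have R2: "\<phi>1 n m * \<phi>2 n (m+1) - \<phi>2 n m * \<phi>1 n (m+1) = W"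
    using hat W_def by simp
  have R3: "\<phi>1 n (m+1) * \<phi>2 (n+1) (m+1) - \<phi>2 n (m+1) * \<phi>1 (n+1) (m+1) = t^2 * W"
    using tilde[of n "m+1"] W2 by simp
  have R4: "\<phi>1 (n+1) m * \<phi>2 (n+1) (m+1) - \<phi>2 (n+1) m * \<phi>1 (n+1) (m+1) = s^2 * W"
    using hat[of "n+1" m] W1 by simp
  show "(\<alpha>^2 - p^2) * \<phi> n m * \<phi> n (m+1) - (\<beta>^2 - p^2) * \<phi> n m * \<phi> (n+1) m
           - \<phi> (n+1) m * \<phi> (n+1) (m+1) + \<phi> n (m+1) * \<phi> (n+1) (m+1) = 0"
  proof (cases "\<phi> = \<phi>1")
    case True
    have "s^2 * \<phi>1 n m * \<phi>1 n (m+1) - t^2 * \<phi>1 n m * \<phi>1 (n+1) m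
           - \<phi>1 (n+1) m * \<phi>1 (n+1) (m+1) + \<phi>1 n (m+1) * \<phi>1 (n+1) (m+1) = 0"
      by (rule core[OF R1 R2 R3 R4 W0])
    then show ?thesis using True hs ht by simp
  next
    case False
    then have F: "\<phi> = \<phi>2" using ph by simp
    have "s^2 * \<phi>2 n m * \<phi>2 n (m+1) - t^2 * \<phi>2 n m * \<phi>2 (n+1) m
           - \<phi>2 (n+1) m * \<phi>2 (n+1) (m+1) + \<phi>2 n (m+1) * \<phi>2 (n+1) (m+1) = 0"
    proof (rule core[where W="-W"])
      show "\<phi>2 n m * \<phi>1 (n+1) m - \<phi>1 n m * \<phi>2 (n+1) m = - W" using R1 by (simp add: algebra_simps)
      show "\<phi>2 n m * \<phi>1 n (m+1) - \<phi>1 n m * \<phi>2 n (m+1) = - W" using R2 by (simp add: algebra_simps)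
      show "\<phi>2 n (m+1) * \<phi>1 (n+1) (m+1) - \<phi>1 n (m+1) * \<phi>2 (n+1) (m+1) = t^2 * - W" using R3 by (simp add: algebra_simps)
      show "\<phi>2 (n+1) m * \<phi>1 (n+1) (m+1) - \<phi>1 (n+1) m * \<phi>2 (n+1) (m+1) = s^2 * - W" using R4 by (simp add: algebra_simps)
      show "- W \<noteq> 0" using W0 by simp
    qed
    then show ?thesis using F hs ht by simp
  qed
qed

end
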